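(* Let $\mathbf{X}=(\mathbf{x}^1,\dots,\mathbf{x}^n)\in\mathbb{R}^{n\times T\times q}$ and $\mathbf{X}'=(\mathbf{x}'^1,\dots,\mathbf{x}'^{n})\in\mathbb{R}^{n\times T'\times q}$ be datasets each composed of $n$ time series, with uniform weights $\mathbf{w}=\mathbf{w}'=(1/n,\dots,1/n)$. Then the MAD problem admits an optimal solution $(\boldsymbol\gamma^\star,\boldsymbol\pi^\star)$ whose transportation plan $\boldsymbol\gamma^\star$ is a one-to-one matching, i.e. $n\boldsymbol\gamma^\star$ is a permutation matrix: each sample of $\mathbf{X}$ is matched to exactly one sample of $\mathbf{X}'$ and conversely. The same holds for the $|\mathcal{C}|$-MAD problem for any labels $\mathbf{Y}\in\mathcal{C}^n$ of $\mathbf{X}$.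
   Context: Here $\mathbf{x}^i_t\in\mathbb{R}^q$ is the $t$-th time step of the $i$-th series. The set of couplings is $\Gamma(\mathbf{w},\mathbf{w}')=\{\boldsymbol\gamma\in\mathbb{R}_{\ge0}^{n\times n}:\boldsymbol\gamma\mathbf{1}=\mathbf{w},\ \boldsymbol\gamma^\top\mathbf{1}=\mathbf{w}'\}$. $\mathcal{A}(T,T')$ is the finite set of admissible DTW alignments. These are binary matrices $\boldsymbol\pi\in\{0,1\}^{T\times T'}$ whose nonzero entries form a path from $(1,1)$ to $(T,T')$ using only steps $(1,0)$, $(0,1)$ or $(1,1)$. The cost tensor is $\mathbf{L}(\mathbf{X},\mathbf{X}')$, with entries $L^{i,j}_{t,t'}=\|\mathbf{x}^i_t-\mathbf{x}'^j_{t'}\|_2^2$. For $\boldsymbol\pi\in\mathbb{R}^{T\times T'}$, $(\mathbf{L}\otimes\boldsymbol\pi)_{ij}=\sum_{t,t'}L^{i,j}_{t,t'}\pi_{tt'}$. The two problems are: - The MAD problem is $\min_{\boldsymbol\gamma\in\Gamma(\mathbf{w},\mathbf{w}'),\ \boldsymbol\pi\in\mathcal{A}(T,T')}\langle\mathbf{L}(\mathbf{X},\mathbf{X}')\otimes\boldsymbol\pi,\boldsymbol\gamma\rangle$, with Frobenius inner product. - Given a finite class set $\mathcal{C}$ and labels $\mathbf{Y}=(y_1,\dots,y_n)\in\mathcal{C}^n$, the $|\mathcal{C}|$-MAD problem is $\min\sum_{i,j}\gamma_{ij}\sum_{t,t'}L^{i,j}_{t,t'}\pi^{(y_i)}_{tt'}$.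 The minimum is over $\boldsymbol\gamma\in\Gamma(\mathbf{w},\mathbf{w}')$ and one alignment $\boldsymbol\pi^{(c)}\in\mathcal{A}(T,T')$ per class $c\in\mathcal{C}$. *)

theory Defs
  imports "HOL-Analysis.Analysis"
begin

(* A dataset of n time series
   of length T in R^q is X :: nat => nat => real^'q, with X i t the t-th time step
   of the i-th series (i < n, t < T).  Matrices are functions nat => nat => real
   restricted to the relevant index ranges (and required to vanish outside). *)

definition cost_tensor :: "(nat \<Rightarrow> nat \<Rightarrow> real^'q) \<Rightarrow> (nat \<Rightarrow> nat \<Rightarrow> real^'q)
    \<Rightarrow> nat \<Rightarrow> nat \<Rightarrow> nat \<Rightarrow> nat \<Rightarrow> real" where
  "cost_tensor X X' i j t t' = (norm (X i t - X' j t'))\<^sup>2"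

definition couplings :: "nat \<Rightarrow> (nat \<Rightarrow> real) \<Rightarrow> (nat \<Rightarrow> real) \<Rightarrow> (nat \<Rightarrow> nat \<Rightarrow> real) set" where
  "couplings n w w' = {\<gamma>.
     (\<forall>i j. (i < n \<and> j < n \<longrightarrow> \<gamma> i j \<ge> 0) \<and> (\<not> (i < n \<and> j < n) \<longrightarrow> \<gamma> i j = 0)) \<and>
     (\<forall>i<n. (\<Sum>j<n. \<gamma> i j) = w i) \<and>
     (\<forall>j<n. (\<Sum>i<n. \<gamma> i j) = w' j)}"

definition uniform_weights :: "nat \<Rightarrow> nat \<Rightarrow> real" where
  "uniform_weights n = (\<lambda>_. 1 / real n)"

definition dtw_alignments :: "nat \<Rightarrow> nat \<Rightarrow> (nat \<Rightarrow> nat \<Rightarrow> real) set" where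
  "dtw_alignments T T' = {\<pi>. \<exists>p :: (nat \<times> nat) list.
     p \<noteq> [] \<and> hd p = (0, 0) \<and> last p = (T - 1, T' - 1) \<and>
     (\<forall>k. Suc k < length p \<longrightarrow>
        p ! Suc k \<in> {(fst (p ! k) + 1, snd (p ! k)), (fst (p ! k), snd (p ! k) + 1),
                      (fst (p ! k) + 1, snd (p ! k) + 1)}) \<and>
     (\<forall>t t'. \<pi> t t' = (if (t, t') \<in> set p then 1 else 0))}"

definition mad_cost :: "nat \<Rightarrow> nat \<Rightarrow> nat \<Rightarrow> (nat \<Rightarrow> nat \<Rightarrow> real^'q) \<Rightarrow> (nat \<Rightarrow> nat \<Rightarrow> real^'q)
    \<Rightarrow> (nat \<Rightarrow> nat \<Rightarrow> real) \<Rightarrow> (nat \<Rightarrow> nat \<Rightarrow> real) \<Rightarrow> real" where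
  "mad_cost n T T' X X' \<gamma> \<pi> =
     (\<Sum>i<n. \<Sum>j<n. \<gamma> i j * (\<Sum>t<T. \<Sum>t'<T'. cost_tensor X X' i j t t' * \<pi> t t'))"

definition cmad_cost :: "nat \<Rightarrow> nat \<Rightarrow> nat \<Rightarrow> (nat \<Rightarrow> nat \<Rightarrow> real^'q) \<Rightarrow> (nat \<Rightarrow> nat \<Rightarrow> real^'q)
    \<Rightarrow> (nat \<Rightarrow> 'c) \<Rightarrow> (nat \<Rightarrow> nat \<Rightarrow> real) \<Rightarrow> ('c \<Rightarrow> nat \<Rightarrow> nat \<Rightarrow> real) \<Rightarrow> real" where
  "cmad_cost n T T' X X' Y \<gamma> Pa =
     (\<Sum>i<n. \<Sum>j<n. \<gamma> i j * (\<Sum>t<T. \<Sum>t'<T'. cost_tensor X X' i j t t' * Pa (Y i) t t'))"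

definition mad_optimal where
  "mad_optimal n T T' X X' w w' \<gamma> \<pi> \<longleftrightarrow>
     \<gamma> \<in> couplings n w w' \<and> \<pi> \<in> dtw_alignments T T' \<and>
     (\<forall>\<gamma>2 \<in> couplings n w w'. \<forall>\<pi>2 \<in> dtw_alignments T T'.
        mad_cost n T T' X X' \<gamma> \<pi> \<le> mad_cost n T T' X X' \<gamma>2 \<pi>2)"

definition cmad_optimal where
  "cmad_optimal n T T' X X' C Y w w' \<gamma> Pa \<longleftrightarrow>
     \<gamma> \<in> couplings n w w' \<and> (\<forall>c\<in>C. Pa c \<in> dtw_alignments T T') \<and>
     (\<forall>\<gamma>2 \<in> couplings n w w'. \<forall>Pa2. (\<forall>c\<in>C. Pa2 c \<in> dtw_alignments T T') \<longrightarrow>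
        cmad_cost n T T' X X' Y \<gamma> Pa \<le> cmad_cost n T T' X X' Y \<gamma>2 Pa2)"

definition is_scaled_permutation :: "nat \<Rightarrow> (nat \<Rightarrow> nat \<Rightarrow> real) \<Rightarrow> bool" where
  "is_scaled_permutation n \<gamma> \<longleftrightarrow>
     (\<exists>\<sigma>. bij_betw \<sigma> {..<n} {..<n} \<and>
        (\<forall>i<n. \<forall>j<n. real n * \<gamma> i j = (if j = \<sigma> i then 1 else 0)))"

end

theory Submission imports Defs begin

lemma hall:
  assumes "finite I" "\<forall>i\<in>I. finite (S i)" "\<forall>J\<subseteq>I. card J \<le> card (\<Union>(S ` J))"
  shows "\<exists>f. inj_on f I \<and> (\<forall>i\<in>I. f i \<in> S i)"
  using assms
proof (induction "card I" arbitrary: I S rule: less_induct)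
  case less
  show ?case
  proof (cases "I = {}")
    case True then show ?thesis by auto
  next
    case Ine: False
    show ?thesis
    proof (cases "\<exists>J. J \<noteq> {} \<and> J \<subset> I \<and> card (\<Union>(S ` J)) \<le> card J")
      case True
      then obtain J where J: "J \<noteq> {}" "J \<subset> I" "card (\<Union>(S ` J)) \<le> card J" by blast
      have fJ: "finite J" using J(2) less.prems(1) finite_subset by blast
      have cJ: "card J < card I" using J(2) less.prems(1) psubset_card_mono by blast
      have "\<exists>f. inj_on f J \<and> (\<forall>i\<in>J. f i \<in> S i)"
        apply (rule less.hyps[OF cJ fJ])
        using less.prems J(2) by auto
      then obtain f1 where f1: "inj_on f1 J" "\<forall>i\<in>J. f1 i \<in> S i" by blast
      define U where "U = \<Union>(S ` J)"
      have fU: "finite U" unfolding U_def using fJ J(2) less.prems(2) by auto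
      have cU: "card U = card J" using J(3) less.prems(3) J(2) unfolding U_def
        by (metis dual_order.antisym psubset_imp_subset)
      have cI: "card (I - J) < card I" using J(1,2) less.prems(1)
      proof -
        have "card (I - J) = card I - card J" using J(2) fJ by (simp add: card_Diff_subset psubset_imp_subset)
        moreover have "card J > 0" using fJ J(1) by (simp add: card_gt_0_iff)
        moreover have "card I > 0" using cJ by simp
        ultimately show ?thesis by simp
      qed
      have hallK: "\<forall>K\<subseteq>I - J. card K \<le> card (\<Union>((\<lambda>i. S i - U) ` K))"
      proof (intro allI impI)
        fix K assume K: "K \<subseteq> I - J"
        have fK: "finite K" using K less.prems(1) finite_subset by blast
        have disj: "K \<inter> J = {}" using K by blast
        have "card K + card J = card (K \<union> J)" using fK fJ disj by (simp add: card_Un_disjoint)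
        also have "\<dots> \<le> card (\<Union>(S ` (K \<union> J)))"
          using less.prems(3) K J(2) by (meson Diff_subset Un_least order.trans psubset_imp_subset)
        also have "\<Union>(S ` (K \<union> J)) = \<Union>((\<lambda>i. S i - U) ` K) \<union> U" unfolding U_def by auto
        also have "card \<dots> = card (\<Union>((\<lambda>i. S i - U) ` K)) + card U"
          apply (rule card_Un_disjoint)
          using fK K less.prems(2) fU by auto
        finally show "card K \<le> card (\<Union>((\<lambda>i. S i - U) ` K))" using cU by simp
      qed
      have "\<exists>f. inj_on f (I - J) \<and> (\<forall>i\<in>I - J. f i \<in> S i - U)"
        apply (rule less.hyps[OF cI])
        using less.prems hallK by auto
      then obtain f2 where f2: "inj_on f2 (I - J)" "\<forall>i\<in>I - J. f2 i \<in> S i - U" by blast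
      define f where "f i = (if i \<in> J then f1 i else f2 i)" for i
      have "inj_on f I"
      proof (rule inj_onI)
        fix x y assume xy: "x \<in> I" "y \<in> I" "f x = f y"
        show "x = y"
        proof (cases "x \<in> J"; cases "y \<in> J")
          assume "x \<in> J" "y \<in> J" then show ?thesis using xy f1 unfolding f_def by (auto dest: inj_onD)
        next
          assume "x \<notin> J" "y \<notin> J" then show ?thesis using xy f2 unfolding f_def by (auto dest: inj_onD)
        next
          assume a: "x \<in> J" "y \<notin> J"
          then have "f x \<in> U" using f1 unfolding f_def U_def by auto
          moreover have "f y \<notin> U" using a xy(2) f2(2) unfolding f_def by auto
          ultimately show ?thesis using xy by simp
        next
          assume a: "x \<notin> J" "y \<in> J"
          then have "f y \<in> U" using f1 unfolding f_def U_def by auto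
          moreover have "f x \<notin> U" using a xy(1) f2(2) unfolding f_def by auto
          ultimately show ?thesis using xy by simp
        qed
      qed
      moreover have "\<forall>i\<in>I. f i \<in> S i" using f1 f2 unfolding f_def by auto
      ultimately show ?thesis by blast
    next
      case False
      then have strict: "\<forall>J. J \<noteq> {} \<and> J \<subset> I \<longrightarrow> card J < card (\<Union>(S ` J))"
        using not_le by blast
      obtain i0 where i0: "i0 \<in> I" using Ine by blast
      have "card {i0} \<le> card (S i0)" using less.prems(3) i0 by (metis (full_types) image_empty image_insert cSup_singleton empty_subsetI insert_subset)
      then have "S i0 \<noteq> {}" by auto
      then obtain x where x: "x \<in> S i0" by blast
      have cI: "card (I - {i0}) < card I" using i0 less.prems(1) by (meson card_Diff1_less)
      have hallK: "\<forall>K\<subseteq>I - {i0}. card K \<le> card (\<Union>((\<lambda>i. S i - {x}) ` K))"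
      proof (intro allI impI)
        fix K assume K: "K \<subseteq> I - {i0}"
        show "card K \<le> card (\<Union>((\<lambda>i. S i - {x}) ` K))"
        proof (cases "K = {}")
          case True then show ?thesis by simp
        next
          case False
          then have a: "card K < card (\<Union>(S ` K))" using strict K i0 by blast
          have e: "\<Union>((\<lambda>i. S i - {x}) ` K) = \<Union>(S ` K) - {x}" by auto
          have b: "card (\<Union>(S ` K)) - 1 \<le> card (\<Union>(S ` K) - {x})"
            by (simp add: card_Diff_singleton_if)
          show ?thesis unfolding e using a b by linarith
        qed
      qed
      have "\<exists>f. inj_on f (I - {i0}) \<and> (\<forall>i\<in>I - {i0}. f i \<in> S i - {x})"
        apply (rule less.hyps[OF cI])
        using less.prems hallK by auto
      then obtain f2 where f2: "inj_on f2 (I - {i0})" "\<forall>i\<in>I - {i0}. f2 i \<in> S i - {x}" by blast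
      define f where "f = f2(i0 := x)"
      have "inj_on f I" unfolding f_def using f2 i0
        by (auto simp: inj_on_def)
      moreover have "\<forall>i\<in>I. f i \<in> S i" using f2 x unfolding f_def by auto
      ultimately show ?thesis by blast
    qed
  qed
qed


lemma perm_col_sum:
  fixes c :: real and n :: nat
  assumes "\<sigma> permutes {..<n}" "j < n"
  shows "(\<Sum>i<n. if j = \<sigma> i then c else 0) = c"
proof -
  have "(\<Sum>i<n. (\<lambda>k. if j = k then c else 0) (\<sigma> i)) = (\<Sum>k<n. if j = k then c else 0)"
    by (rule sum.reindex_bij_betw[OF permutes_imp_bij[OF assms(1)]])
  also have "\<dots> = c" using assms(2) by (subst sum.delta'; simp)
  finally show ?thesis .
qed

lemma support_perm:
  fixes A :: "nat \<Rightarrow> nat \<Rightarrow> real"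
  assumes nn: "\<forall>i<n. \<forall>j<n. A i j \<ge> 0"
    and rs: "\<forall>i<n. (\<Sum>j<n. A i j) = s" and cs: "\<forall>j<n. (\<Sum>i<n. A i j) = s"
    and sp: "s > 0"
  shows "\<exists>\<sigma>. \<sigma> permutes {..<n} \<and> (\<forall>i<n. A i (\<sigma> i) > 0)"
proof -
  define S where "S i = {j. j < n \<and> A i j > 0}" for i
  have hc: "\<forall>J\<subseteq>{..<n}. card J \<le> card (\<Union>(S ` J))"
  proof (intro allI impI)
    fix J assume J: "J \<subseteq> {..<n}"
    define U where "U = \<Union>(S ` J)"
    have Usub: "U \<subseteq> {..<n}" unfolding U_def S_def by auto
    have "(\<Sum>i\<in>J. \<Sum>j<n. A i j) = (\<Sum>i\<in>J. s)" using J rs by (intro sum.cong) auto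
    then have "s * card J = (\<Sum>i\<in>J. \<Sum>j<n. A i j)" by simp
    also have "\<dots> = (\<Sum>i\<in>J. \<Sum>j\<in>U. A i j)"
    proof (rule sum.cong[OF refl])
      fix i assume i: "i \<in> J"
      show "(\<Sum>j<n. A i j) = (\<Sum>j\<in>U. A i j)"
      proof -
        have z: "\<forall>j\<in>{..<n} - U. A i j = 0"
        proof
          fix j assume "j \<in> {..<n} - U"
          then have "j < n" "\<not> A i j > 0" using i unfolding U_def S_def by auto
          then show "A i j = 0" using nn i J by force
        qed
        show ?thesis using sum.mono_neutral_right[OF _ Usub z] by simp
      qed
    qed
    also have "\<dots> = (\<Sum>j\<in>U. \<Sum>i\<in>J. A i j)" by (rule sum.swap)
    also have "\<dots> \<le> (\<Sum>j\<in>U. \<Sum>i<n. A i j)"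
    proof (rule sum_mono)
      fix j assume "j \<in> U"
      then have "j < n" using Usub by auto
      then show "(\<Sum>i\<in>J. A i j) \<le> (\<Sum>i<n. A i j)"
        using J nn by (intro sum_mono2) auto
    qed
    also have "\<dots> = (\<Sum>j\<in>U. s)" using cs Usub by (intro sum.cong) auto
    also have "\<dots> = s * card U" by simp
    finally have "s * card J \<le> s * card U" .
    then show "card J \<le> card (\<Union>(S ` J))" using sp unfolding U_def by simp
  qed
  obtain f where f: "inj_on f {..<n}" "\<forall>i\<in>{..<n}. f i \<in> S i"
    using hall[of "{..<n}" S] hc unfolding S_def by auto
  have fim: "f ` {..<n} \<subseteq> {..<n}" using f(2) unfolding S_def by auto
  have "f ` {..<n} = {..<n}" using endo_inj_surj[OF _ fim f(1)] by simp
  then have bb: "bij_betw f {..<n} {..<n}" using f(1) by (simp add: bij_betw_def)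
  define \<sigma> where "\<sigma> i = (if i < n then f i else i)" for i
  have "bij_betw \<sigma> {..<n} {..<n}" using bb unfolding \<sigma>_def
    by (rule bij_betw_cong[THEN iffD1, rotated]) auto
  then have "\<sigma> permutes {..<n}" by (rule bij_imp_permutes) (simp add: \<sigma>_def)
  moreover have "\<forall>i<n. A i (\<sigma> i) > 0" using f(2) unfolding \<sigma>_def S_def by auto
  ultimately show ?thesis by blast
qed


lemma birkhoff_min:
  fixes A M :: "nat \<Rightarrow> nat \<Rightarrow> real" and n :: nat
  assumes "\<forall>i<n. \<forall>j<n. A i j \<ge> 0" "\<forall>i<n. (\<Sum>j<n. A i j) = s" "\<forall>j<n. (\<Sum>i<n. A i j) = s"
  shows "\<exists>\<sigma>. \<sigma> permutes {..<n} \<and> s * (\<Sum>i<n. M i (\<sigma> i)) \<le> (\<Sum>i<n. \<Sum>j<n. A i j * M i j)"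
  using assms
proof (induction "card {(i,j). i<n \<and> j<n \<and> A i j \<noteq> 0}" arbitrary: A s rule: less_induct)
  case less
  note nn = less.prems(1) and rs = less.prems(2) and cs = less.prems(3)
  show ?case
  proof (cases "n = 0")
    case True then show ?thesis by (intro exI[of _ id]) (simp add: permutes_id)
  next
    case n0: False
    have "s = (\<Sum>j<n. A 0 j)" using rs n0 by simp
    also have "\<dots> \<ge> 0" by (rule sum_nonneg) (use nn n0 in auto)
    finally have s0: "s \<ge> 0" .
    show ?thesis
    proof (cases "s = 0")
      case True
      have "\<forall>i<n. \<forall>j<n. A i j = 0"
      proof (intro allI impI)
        fix i j assume ij: "i < n" "j < n"
        have "(\<Sum>j<n. A i j) = 0" using rs ij True by simp
        then show "A i j = 0" using sum_nonneg_eq_0_iff[of "{..<n}" "A i"] nn ij by simp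
      qed
      then have "(\<Sum>i<n. \<Sum>j<n. A i j * M i j) = 0" by simp
      then show ?thesis using True by (intro exI[of _ id]) (simp add: permutes_id)
    next
      case False
      with s0 have sp: "s > 0" by simp
      obtain \<sigma> where \<sigma>: "\<sigma> permutes {..<n}" "\<forall>i<n. A i (\<sigma> i) > 0"
        using support_perm[OF nn rs cs sp] by blast
      have \<sigma>n: "\<And>i. i < n \<Longrightarrow> \<sigma> i < n" using permutes_in_image[OF \<sigma>(1)] by simp
      define lam where "lam = Min ((\<lambda>i. A i (\<sigma> i)) ` {..<n})"
      have fin: "finite ((\<lambda>i. A i (\<sigma> i)) ` {..<n})" "(\<lambda>i. A i (\<sigma> i)) ` {..<n} \<noteq> {}" using n0 by auto
      obtain i0 where i0: "i0 < n" "A i0 (\<sigma> i0) = lam"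
        using Min_in[OF fin] unfolding lam_def by auto
      have lpos: "lam > 0" using i0 \<sigma>(2) by auto
      have lle: "\<And>i. i < n \<Longrightarrow> lam \<le> A i (\<sigma> i)" unfolding lam_def using fin by auto
      have ls: "lam \<le> s"
      proof -
        have "A i0 (\<sigma> i0) \<le> (\<Sum>j<n. A i0 j)"
          by (rule member_le_sum) (use nn i0 \<sigma>n in auto)
        then show ?thesis using i0 rs by simp
      qed
      define A' where "A' i j = A i j - (if j = \<sigma> i then lam else 0)" for i j
      have nn': "\<forall>i<n. \<forall>j<n. A' i j \<ge> 0" unfolding A'_def using nn lle by auto
      have rs': "\<forall>i<n. (\<Sum>j<n. A' i j) = s - lam"
      proof (intro allI impI)
        fix i assume i: "i < n"
        have "(\<Sum>j<n. A' i j) = (\<Sum>j<n. A i j) - (\<Sum>j<n. if j = \<sigma> i then lam else 0)"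
          unfolding A'_def by (simp add: sum_subtractf)
        also have "(\<Sum>j<n. if j = \<sigma> i then lam else 0) = lam" using \<sigma>n[OF i] by simp
        finally show "(\<Sum>j<n. A' i j) = s - lam" using rs i by simp
      qed
      have cs': "\<forall>j<n. (\<Sum>i<n. A' i j) = s - lam"
      proof (intro allI impI)
        fix j assume j: "j < n"
        have "(\<Sum>i<n. A' i j) = (\<Sum>i<n. A i j) - (\<Sum>i<n. if j = \<sigma> i then lam else 0)"
          unfolding A'_def by (simp add: sum_subtractf)
        also have "(\<Sum>i<n. if j = \<sigma> i then lam else 0) = lam" by (rule perm_col_sum[OF \<sigma>(1) j])
        finally show "(\<Sum>i<n. A' i j) = s - lam" using cs j by simp
      qed
      have sub: "{(i,j). i<n \<and> j<n \<and> A' i j \<noteq> 0} \<subset> {(i,j). i<n \<and> j<n \<and> A i j \<noteq> 0}"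
      proof
        show "{(i,j). i<n \<and> j<n \<and> A' i j \<noteq> 0} \<subseteq> {(i,j). i<n \<and> j<n \<and> A i j \<noteq> 0}"
          unfolding A'_def using \<sigma>(2) by auto
        have "(i0, \<sigma> i0) \<in> {(i,j). i<n \<and> j<n \<and> A i j \<noteq> 0}" using i0 \<sigma>n lpos by auto
        moreover have "(i0, \<sigma> i0) \<notin> {(i,j). i<n \<and> j<n \<and> A' i j \<noteq> 0}" using i0 unfolding A'_def by auto
        ultimately show "{(i,j). i<n \<and> j<n \<and> A' i j \<noteq> 0} \<noteq> {(i,j). i<n \<and> j<n \<and> A i j \<noteq> 0}" by blast
      qed
      have finS: "finite {(i,j). i<n \<and> j<n \<and> A i j \<noteq> 0}"
        by (rule finite_subset[of _ "{..<n} \<times> {..<n}"]) auto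
      have lt: "card {(i,j). i<n \<and> j<n \<and> A' i j \<noteq> 0} < card {(i,j). i<n \<and> j<n \<and> A i j \<noteq> 0}"
        by (rule psubset_card_mono[OF finS sub])
      obtain \<sigma>' where \<sigma>': "\<sigma>' permutes {..<n}"
          "(s - lam) * (\<Sum>i<n. M i (\<sigma>' i)) \<le> (\<Sum>i<n. \<Sum>j<n. A' i j * M i j)"
        using less.hyps[OF lt nn' rs' cs'] by blast
      have dec: "(\<Sum>i<n. \<Sum>j<n. A i j * M i j) = (\<Sum>i<n. \<Sum>j<n. A' i j * M i j) + lam * (\<Sum>i<n. M i (\<sigma> i))"
      proof -
        have "(\<Sum>i<n. \<Sum>j<n. A i j * M i j) = (\<Sum>i<n. (\<Sum>j<n. A' i j * M i j) + lam * M i (\<sigma> i))"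
        proof (rule sum.cong[OF refl])
          fix i assume i: "i \<in> {..<n}"
          have "(\<Sum>j<n. A i j * M i j) = (\<Sum>j<n. A' i j * M i j + (if j = \<sigma> i then lam * M i j else 0))"
            unfolding A'_def by (intro sum.cong) (auto simp: algebra_simps)
          also have "\<dots> = (\<Sum>j<n. A' i j * M i j) + (\<Sum>j<n. if j = \<sigma> i then lam * M i j else 0)"
            by (simp add: sum.distrib)
          also have "(\<Sum>j<n. if j = \<sigma> i then lam * M i j else 0) = lam * M i (\<sigma> i)"
            using \<sigma>n i by simp
          finally show "(\<Sum>j<n. A i j * M i j) = (\<Sum>j<n. A' i j * M i j) + lam * M i (\<sigma> i)" .
        qed
        then show ?thesis by (simp add: sum.distrib sum_distrib_left)
      qed
      define c where "c = (\<Sum>i<n. M i (\<sigma> i))"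
      define c' where "c' = (\<Sum>i<n. M i (\<sigma>' i))"
      have key: "(s - lam) * c' + lam * c \<le> (\<Sum>i<n. \<Sum>j<n. A i j * M i j)"
        using dec \<sigma>'(2) unfolding c_def c'_def by linarith
      show ?thesis
      proof (cases "c \<le> c'")
        case True
        have "(s - lam) * c \<le> (s - lam) * c'" using True ls by (intro mult_left_mono) auto
        then have "s * c \<le> (\<Sum>i<n. \<Sum>j<n. A i j * M i j)" using key by (simp add: algebra_simps)
        then show ?thesis using \<sigma>(1) unfolding c_def by blast
      next
        case False
        have "lam * c' \<le> lam * c" using False lpos by (intro mult_left_mono) auto
        then have "s * c' \<le> (\<Sum>i<n. \<Sum>j<n. A i j * M i j)" using key by (simp add: algebra_simps)
        then show ?thesis using \<sigma>'(1) unfolding c'_def by blast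
      qed
    qed
  qed
qed


lemma dtw_nonempty:
  assumes "T \<ge> 1" "T' \<ge> 1"
  shows "\<exists>\<pi>. \<pi> \<in> dtw_alignments T T'"
proof -
  define f where "f k = (min k (T - 1), k - (T - 1))" for k :: nat
  define p where "p = map f [0..<T + T' - 1]"
  have len: "length p = T + T' - 1" unfolding p_def by simp
  have ne: "p \<noteq> []" using assms unfolding p_def by simp
  have hd: "hd p = (0, 0)" using assms unfolding p_def f_def by (simp add: hd_map upt_rec)
  have last: "last p = (T - 1, T' - 1)"
  proof -
    have "last p = p ! (length p - 1)" using ne by (simp add: last_conv_nth)
    also have "\<dots> = f (length p - 1)" unfolding p_def using assms by simp
    also have "\<dots> = (T - 1, T' - 1)" unfolding f_def len using assms by auto
    finally show ?thesis .
  qed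
  have step: "\<forall>k. Suc k < length p \<longrightarrow>
        p ! Suc k \<in> {(fst (p ! k) + 1, snd (p ! k)), (fst (p ! k), snd (p ! k) + 1),
                      (fst (p ! k) + 1, snd (p ! k) + 1)}"
  proof (intro allI impI)
    fix k assume k: "Suc k < length p"
    have e1: "p ! Suc k = f (Suc k)" "p ! k = f k" using k len unfolding p_def by auto
    show "p ! Suc k \<in> {(fst (p ! k) + 1, snd (p ! k)), (fst (p ! k), snd (p ! k) + 1),
                      (fst (p ! k) + 1, snd (p ! k) + 1)}"
    proof (cases "k < T - 1")
      case True
      then have "f (Suc k) = (fst (f k) + 1, snd (f k))" unfolding f_def by auto
      then show ?thesis using e1 by simp
    next
      case False
      then have "f (Suc k) = (fst (f k), snd (f k) + 1)" unfolding f_def by auto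
      then show ?thesis using e1 by simp
    qed
  qed
  define \<pi> where "\<pi> t t' = (if (t, t') \<in> set p then (1::real) else 0)" for t t'
  have "\<pi> \<in> dtw_alignments T T'" unfolding dtw_alignments_def
    using ne hd last step \<pi>_def by blast
  then show ?thesis by blast
qed

lemma cmad_main:
  fixes n T T' :: nat
    and X X' :: "nat \<Rightarrow> nat \<Rightarrow> real^'q"
    and C :: "'c set" and Y :: "nat \<Rightarrow> 'c"
  assumes T: "T \<ge> 1" and T': "T' \<ge> 1"
    and finC: "finite C" and YC: "\<forall>i<n. Y i \<in> C"
  shows "\<exists>\<gamma> Pa. cmad_optimal n T T' X X' C Y (uniform_weights n) (uniform_weights n) \<gamma> Pa
                \<and> is_scaled_permutation n \<gamma>"
proof -
  define A where "A = dtw_alignments T T'"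
  define Adm where "Adm = {Pa. \<forall>c\<in>C. Pa c \<in> A}"
  define Mf where "Mf Pa i j = (\<Sum>t<T. \<Sum>t'<T'. cost_tensor X X' i j t t' * Pa (Y i) t t')"
    for Pa :: "'c \<Rightarrow> nat \<Rightarrow> nat \<Rightarrow> real" and i j
  define g where "g \<sigma> Pa = (1 / real n) * (\<Sum>i<n. Mf Pa i (\<sigma> i))" for \<sigma> Pa
  define P where "P = {\<sigma>. \<sigma> permutes {..<n}}"
  define V where "V = (\<lambda>(\<sigma>, Pa). g \<sigma> Pa) ` (P \<times> Adm)"
  have cm: "cmad_cost n T T' X X' Y \<gamma> Pa = (\<Sum>i<n. \<Sum>j<n. \<gamma> i j * Mf Pa i j)" for \<gamma> Pa
    unfolding cmad_cost_def Mf_def by simp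
  obtain \<pi>0 where \<pi>0: "\<pi>0 \<in> A" using dtw_nonempty[OF T T'] unfolding A_def by blast
  have "(\<lambda>_. \<pi>0) \<in> Adm" using \<pi>0 unfolding Adm_def by simp
  moreover have "id \<in> P" unfolding P_def by (simp add: permutes_id)
  ultimately have Vne: "V \<noteq> {}" unfolding V_def by blast
  define tr where "tr \<pi> = (\<lambda>t t'. if t < T \<and> t' < T' then \<pi> t t' else (0::real))" for \<pi> :: "nat \<Rightarrow> nat \<Rightarrow> real"
  define F where "F = (\<lambda>S t t'. if (t, t') \<in> S then (1::real) else 0) ` Pow ({..<T} \<times> {..<T'})"
  have finF: "finite F" unfolding F_def by simp
  have trF: "tr \<pi> \<in> F" if piA: "\<pi> \<in> A" for \<pi>
  proof -
    obtain p :: "(nat \<times> nat) list" where p: "\<forall>t t'. \<pi> t t' = (if (t, t') \<in> set p then 1 else 0)"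
      using piA unfolding A_def dtw_alignments_def by blast
    have "tr \<pi> = (\<lambda>t t'. if (t, t') \<in> set p \<inter> ({..<T} \<times> {..<T'}) then (1::real) else 0)"
      unfolding tr_def using p by (intro ext) auto
    then show ?thesis unfolding F_def by blast
  qed
  define R where "R Pa = restrict (\<lambda>c. tr (Pa c)) C" for Pa :: "'c \<Rightarrow> nat \<Rightarrow> nat \<Rightarrow> real"
  have RF: "R Pa \<in> PiE C (\<lambda>_. F)" if "Pa \<in> Adm" for Pa
    using that trF unfolding R_def Adm_def by auto
  have gR: "g \<sigma> Pa = g \<sigma> (R Pa)" for \<sigma> Pa
  proof -
    have "Mf Pa i j = Mf (R Pa) i j" if "i < n" for i j
      unfolding Mf_def R_def tr_def using YC that by simp
    then show ?thesis unfolding g_def by simp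
  qed
  have "V \<subseteq> (\<lambda>(\<sigma>, Q). g \<sigma> Q) ` (P \<times> PiE C (\<lambda>_. F))"
  proof
    fix v assume "v \<in> V"
    then obtain \<sigma> Pa where sp: "\<sigma> \<in> P" "Pa \<in> Adm" "v = g \<sigma> Pa" unfolding V_def by auto
    then have "v = g \<sigma> (R Pa)" using gR by simp
    moreover have "(\<sigma>, R Pa) \<in> P \<times> PiE C (\<lambda>_. F)" using sp RF by blast
    ultimately show "v \<in> (\<lambda>(\<sigma>, Q). g \<sigma> Q) ` (P \<times> PiE C (\<lambda>_. F))"
      by (metis (no_types, lifting) case_prod_conv image_eqI)
  qed
  moreover have "finite P" unfolding P_def by (simp add: finite_permutations)
  moreover have "finite (PiE C (\<lambda>_. F))" using finF finC by (simp add: finite_PiE)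
  ultimately have finV: "finite V"
    using finite_subset finite_imageI finite_cartesian_product by blast
  have "Min V \<in> V" using Min_in[OF finV Vne] .
  then obtain \<sigma>0 Pa0 where m: "\<sigma>0 \<in> P" "Pa0 \<in> Adm" "g \<sigma>0 Pa0 = Min V" unfolding V_def by auto
  have \<sigma>0: "\<sigma>0 permutes {..<n}" using m(1) unfolding P_def by simp
  have \<sigma>n: "\<And>i. i < n \<Longrightarrow> \<sigma>0 i < n" using permutes_in_image[OF \<sigma>0] by simp
  define \<gamma>0 where "\<gamma>0 i j = (if i < n \<and> j < n \<and> j = \<sigma>0 i then 1 / real n else 0)" for i j
  have coup: "\<gamma>0 \<in> couplings n (uniform_weights n) (uniform_weights n)"
  proof -
    have r: "(\<Sum>j<n. \<gamma>0 i j) = 1 / real n" if "i < n" for i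
    proof -
      have "(\<Sum>j<n. \<gamma>0 i j) = (\<Sum>j<n. if j = \<sigma>0 i then 1 / real n else 0)"
        unfolding \<gamma>0_def using that by (intro sum.cong) auto
      also have "\<dots> = 1 / real n" using \<sigma>n[OF that] by simp
      finally show ?thesis .
    qed
    have c: "(\<Sum>i<n. \<gamma>0 i j) = 1 / real n" if "j < n" for j
    proof -
      have "(\<Sum>i<n. \<gamma>0 i j) = (\<Sum>i<n. if j = \<sigma>0 i then 1 / real n else 0)"
        unfolding \<gamma>0_def using that by (intro sum.cong) auto
      also have "\<dots> = 1 / real n" by (rule perm_col_sum[OF \<sigma>0 that])
      finally show ?thesis .
    qed
    show ?thesis unfolding couplings_def uniform_weights_def using r c by (auto simp: \<gamma>0_def)
  qed
  have cost0: "cmad_cost n T T' X X' Y \<gamma>0 Pa0 = g \<sigma>0 Pa0"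
  proof -
    have "(\<Sum>j<n. \<gamma>0 i j * Mf Pa0 i j) = (1 / real n) * Mf Pa0 i (\<sigma>0 i)" if "i < n" for i
    proof -
      have "(\<Sum>j<n. \<gamma>0 i j * Mf Pa0 i j) = (\<Sum>j<n. if j = \<sigma>0 i then (1 / real n) * Mf Pa0 i j else 0)"
        unfolding \<gamma>0_def using that by (intro sum.cong) auto
      also have "\<dots> = (1 / real n) * Mf Pa0 i (\<sigma>0 i)" using \<sigma>n[OF that] by simp
      finally show ?thesis .
    qed
    then show ?thesis unfolding cm g_def by (simp add: sum_distrib_left)
  qed
  have opt: "cmad_optimal n T T' X X' C Y (uniform_weights n) (uniform_weights n) \<gamma>0 Pa0"
    unfolding cmad_optimal_def
  proof (intro conjI ballI allI impI)
    show "\<gamma>0 \<in> couplings n (uniform_weights n) (uniform_weights n)" by (rule coup)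
    fix c assume "c \<in> C" then show "Pa0 c \<in> dtw_alignments T T'" using m(2) unfolding Adm_def A_def by auto
  next
    fix \<gamma>2 Pa2 assume g2: "\<gamma>2 \<in> couplings n (uniform_weights n) (uniform_weights n)"
      and pa2: "\<forall>c\<in>C. Pa2 c \<in> dtw_alignments T T'"
    have nn: "\<forall>i<n. \<forall>j<n. \<gamma>2 i j \<ge> 0" using g2 unfolding couplings_def by auto
    have rs: "\<forall>i<n. (\<Sum>j<n. \<gamma>2 i j) = 1 / real n" using g2 unfolding couplings_def uniform_weights_def by auto
    have cs: "\<forall>j<n. (\<Sum>i<n. \<gamma>2 i j) = 1 / real n" using g2 unfolding couplings_def uniform_weights_def by auto
    obtain \<sigma> where \<sigma>: "\<sigma> permutes {..<n}"
      "1 / real n * (\<Sum>i<n. Mf Pa2 i (\<sigma> i)) \<le> (\<Sum>i<n. \<Sum>j<n. \<gamma>2 i j * Mf Pa2 i j)"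
      using birkhoff_min[OF nn rs cs, of "Mf Pa2"] by blast
    have "(\<sigma>, Pa2) \<in> P \<times> Adm" using \<sigma>(1) pa2 unfolding P_def Adm_def A_def by blast
    then have "g \<sigma> Pa2 \<in> V" unfolding V_def by (rule image_eqI[rotated]) simp
    then have mv: "Min V \<le> g \<sigma> Pa2" using finV by simp
    have "cmad_cost n T T' X X' Y \<gamma>0 Pa0 = Min V" using cost0 m(3) by simp
    also have "\<dots> \<le> g \<sigma> Pa2" by (rule mv)
    also have "\<dots> \<le> (\<Sum>i<n. \<Sum>j<n. \<gamma>2 i j * Mf Pa2 i j)" unfolding g_def by (rule \<sigma>(2))
    also have "\<dots> = cmad_cost n T T' X X' Y \<gamma>2 Pa2" by (rule cm[symmetric])
    finally show "cmad_cost n T T' X X' Y \<gamma>0 Pa0 \<le> cmad_cost n T T' X X' Y \<gamma>2 Pa2" .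
  qed
  have "is_scaled_permutation n \<gamma>0"
    unfolding is_scaled_permutation_def
  proof (intro exI conjI allI impI)
    show "bij_betw \<sigma>0 {..<n} {..<n}" by (rule permutes_imp_bij[OF \<sigma>0])
    fix i j assume ij: "i < n" "j < n"
    then have "real n \<noteq> 0" by simp
    then show "real n * \<gamma>0 i j = (if j = \<sigma>0 i then 1 else 0)" unfolding \<gamma>0_def using ij by simp
  qed
  then show ?thesis using opt by blast
qed

theorem mainTheorem2:
  fixes n T T' :: nat
    and X X' :: "nat \<Rightarrow> nat \<Rightarrow> real^'q"
    and C :: "'c set" and Y :: "nat \<Rightarrow> 'c"
  assumes "T \<ge> 1" and "T' \<ge> 1"
    and "finite C" and "\<forall>i<n. Y i \<in> C"
  shows "(\<exists>\<gamma> \<pi>. mad_optimal n T T' X X' (uniform_weights n) (uniform_weights n) \<gamma> \<pi>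
                \<and> is_scaled_permutation n \<gamma>)
       \<and> (\<exists>\<gamma> Pa. cmad_optimal n T T' X X' C Y (uniform_weights n) (uniform_weights n) \<gamma> Pa
                \<and> is_scaled_permutation n \<gamma>)"
proof (rule conjI)
  show "\<exists>\<gamma> Pa. cmad_optimal n T T' X X' C Y (uniform_weights n) (uniform_weights n) \<gamma> Pa
                \<and> is_scaled_permutation n \<gamma>"
    by (rule cmad_main[OF assms])
  define U where "U = (uniform_weights n)"
  define Y0 where "Y0 = (\<lambda>_::nat. ())"
  have "finite {()}" by simp
  moreover have "\<forall>i<n. Y0 i \<in> {()}" by (simp add: Y0_def)
  ultimately have ex: "\<exists>\<gamma> Pa. cmad_optimal n T T' X X' {()} Y0 U U \<gamma> Pa \<and> is_scaled_permutation n \<gamma>"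
    unfolding U_def by (rule cmad_main[OF assms(1,2)])
  then obtain \<gamma> Pa where o: "cmad_optimal n T T' X X' {()} Y0 U U \<gamma> Pa"
      and sp: "is_scaled_permutation n \<gamma>" by blast
  have eq: "mad_cost n T T' X X' g \<pi> = cmad_cost n T T' X X' Y0 g (\<lambda>_. \<pi>)" for g \<pi>
    unfolding mad_cost_def cmad_cost_def by (rule refl)
  have eq2: "cmad_cost n T T' X X' Y0 g Pa = mad_cost n T T' X X' g (Pa ())" for g
    unfolding mad_cost_def cmad_cost_def Y0_def by (rule refl)
  have o1: "\<gamma> \<in> couplings n U U" and o2: "Pa () \<in> dtw_alignments T T'"
    and o3: "\<And>\<gamma>2 Pa2. \<gamma>2 \<in> couplings n U U \<Longrightarrow> (\<forall>c\<in>{()}. Pa2 c \<in> dtw_alignments T T') \<Longrightarrow>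
        cmad_cost n T T' X X' Y0 \<gamma> Pa \<le> cmad_cost n T T' X X' Y0 \<gamma>2 Pa2"
    using o unfolding cmad_optimal_def by blast+
  have "mad_optimal n T T' X X' U U \<gamma> (Pa ())"
    unfolding mad_optimal_def
  proof (intro conjI ballI)
    show "\<gamma> \<in> couplings n U U" by (rule o1)
    show "Pa () \<in> dtw_alignments T T'" by (rule o2)
    fix \<gamma>2 \<pi>2 assume g2: "\<gamma>2 \<in> couplings n U U" and p2: "\<pi>2 \<in> dtw_alignments T T'"
    have "\<forall>c\<in>{()}. (\<lambda>_. \<pi>2) c \<in> dtw_alignments T T'" using p2 by blast
    from o3[OF g2 this]
    show "mad_cost n T T' X X' \<gamma> (Pa ()) \<le> mad_cost n T T' X X' \<gamma>2 \<pi>2"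
      unfolding eq eq2 .
  qed
  then show "\<exists>\<gamma> \<pi>. mad_optimal n T T' X X' (uniform_weights n) (uniform_weights n) \<gamma> \<pi>
                \<and> is_scaled_permutation n \<gamma>" using sp unfolding U_def by blast
qed

end
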